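(* Let $q$ be a prime power and let $\mathcal{H}_q$ be the Hermitian curve in $\mathrm{PG}(2,q^2)$. Let $\mathcal{B}$ be a $2$-blocking set of $\mathcal{H}_q$. Then in $\mathrm{PG}(2,q^2)$ there exist semiovals of size $k$ for every integer $k$ satisfying $|\mathcal{B}|\leq k\leq q^3+1$.
   Context: $\mathrm{PG}(2,q^2)$ is the Desarguesian projective plane over $\mathbb{F}_{q^2}$. The Hermitian curve $\mathcal{H}_q$ is the set of points of $\mathrm{PG}(2,q^2)$ satisfying $X_2X_0^q+X_2^qX_0+X_1^{q+1}=0$; it has $q^3+1$ points, there is a unique tangent line to $\mathcal{H}_q$ at each of its points, and every other line meets $\mathcal{H}_q$ in exactly $q+1$ points ($(q+1)$-secants). A pointset $\mathcal{D}\subset\mathcal{H}_q$ is a $2$-blocking set of $\mathcal{H}_q$ if every $(q+1)$-secant of $\mathcal{H}_q$ contains at least $2$ points of $\mathcal{D}$. A semioval is a non-empty pointset $\mathcal{S}$ such that for every $P\in\mathcal{S}$ there is a unique line $t_P$ with $\mathcal{S}\cap t_P=\{P\}$. *)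

theory Defs
  imports "HOL-Computational_Algebra.Primes"
begin

type_synonym 'a vec3 = "'a \<times> 'a \<times> 'a"

definition pclass :: "'a::field vec3 \<Rightarrow> 'a vec3 set" where
  "pclass v = (case v of (x, y, z) \<Rightarrow> {(c * x, c * y, c * z) | c. c \<noteq> 0})"

definition pg_points :: "'a::field vec3 set set" where
  "pg_points = {pclass v | v. v \<noteq> (0, 0, 0)}"

definition line_of :: "'a::field vec3 \<Rightarrow> 'a vec3 set set" where
  "line_of u = {P \<in> pg_points. \<forall>(x, y, z) \<in> P. (case u of (a, b, c) \<Rightarrow> a * x + b * y + c * z = 0)}"

definition pg_lines :: "'a::field vec3 set set set" where
  "pg_lines = {line_of u | u. u \<noteq> (0, 0, 0)}"

definition hermitian :: "nat \<Rightarrow> 'a::field vec3 set set" where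
  "hermitian q = {P \<in> pg_points. \<forall>(x0, x1, x2) \<in> P. x2 * x0 ^ q + x2 ^ q * x0 + x1 ^ (q + 1) = 0}"

definition two_blocking_set :: "nat \<Rightarrow> 'a::field vec3 set set \<Rightarrow> bool" where
  "two_blocking_set q D \<longleftrightarrow> D \<subseteq> hermitian q \<and>
     (\<forall>l \<in> pg_lines. card (l \<inter> hermitian q) = q + 1 \<longrightarrow> card (l \<inter> D) \<ge> 2)"

definition semioval :: "'a::field vec3 set set \<Rightarrow> bool" where
  "semioval S \<longleftrightarrow> S \<subseteq> pg_points \<and> S \<noteq> {} \<and>
     (\<forall>P \<in> S. \<exists>!l. l \<in> pg_lines \<and> S \<inter> l = {P})"

definition prime_power :: "nat \<Rightarrow> bool" where
  "prime_power q \<longleftrightarrow> (\<exists>p k. prime p \<and> k \<ge> 1 \<and> q = p ^ k)"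

end

theory Submission
  imports Defs "HOL-Computational_Algebra.Polynomial" "HOL-Number_Theory.Residues"
begin


fun dot :: "'a::field vec3 \<Rightarrow> 'a vec3 \<Rightarrow> 'a" where
  "dot (u0,u1,u2) (x,y,z) = u0*x + u1*y + u2*z"
fun sc :: "'a::field \<Rightarrow> 'a vec3 \<Rightarrow> 'a vec3" where
  "sc c (x,y,z) = (c*x, c*y, c*z)"
fun vadd :: "'a::field vec3 \<Rightarrow> 'a vec3 \<Rightarrow> 'a vec3" where
  "vadd (a,b,c) (x,y,z) = (a+x, b+y, c+z)"
fun cross :: "'a::field vec3 \<Rightarrow> 'a vec3 \<Rightarrow> 'a vec3" where
  "cross (a0,a1,a2) (b0,b1,b2) = (a1*b2 - a2*b1, a2*b0 - a0*b2, a0*b1 - a1*b0)"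

lemma dot_comm: "dot u v = dot v u"
  by (cases u; cases v) (simp add: mult.commute add.commute add.left_commute)

lemma dot_sc: "dot u (sc c v) = c * dot u v"
  by (cases u; cases v) (simp add: algebra_simps)
lemma dot_sc1: "dot (sc c u) v = c * dot u v"
  by (cases u; cases v) (simp add: algebra_simps)
lemma dot_vadd: "dot u (vadd v w) = dot u v + dot u w"
  by (cases u; cases v; cases w) (simp add: algebra_simps)

lemma sc_zero_iff: "(sc c v = (0,0,0)) = (c = 0 \<or> v = (0,0,0))"
  by (cases v) auto

lemma pclass_mem: "w \<in> pclass v \<longleftrightarrow> (\<exists>c. c \<noteq> 0 \<and> w = sc c v)"
  by (cases v) (auto simp: pclass_def)

lemma pclass_self: "v \<in> pclass v"
  using pclass_mem[of v v] by (cases v) (metis mult_1 one_neq_zero sc.simps)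

lemma sc_sc: "sc c (sc d v) = sc (c*d) v"
  by (cases v) (simp add: mult.assoc)

lemma pclass_eq_iff: "pclass v = pclass w \<longleftrightarrow> (\<exists>c. c \<noteq> 0 \<and> w = sc c v)"
proof
  assume "pclass v = pclass w"
  thus "\<exists>c. c \<noteq> 0 \<and> w = sc c v" using pclass_self[of w] pclass_mem by blast
next
  assume "\<exists>c. c \<noteq> 0 \<and> w = sc c v"
  then obtain c where c: "c \<noteq> 0" "w = sc c v" by blast
  show "pclass v = pclass w"
  proof (rule Set.set_eqI)
    fix x
    have "(\<exists>d. d \<noteq> 0 \<and> x = sc d v) \<longleftrightarrow> (\<exists>d. d \<noteq> 0 \<and> x = sc d (sc c v))"
    proof
      assume "\<exists>d. d \<noteq> 0 \<and> x = sc d v"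
      then obtain d where "d \<noteq> 0" "x = sc d v" by blast
      thus "\<exists>d. d \<noteq> 0 \<and> x = sc d (sc c v)" using c
        by (intro exI[of _ "d / c"]) (simp add: sc_sc)
    next
      assume "\<exists>d. d \<noteq> 0 \<and> x = sc d (sc c v)"
      then obtain d where "d \<noteq> 0" "x = sc d (sc c v)" by blast
      thus "\<exists>d. d \<noteq> 0 \<and> x = sc d v" using c
        by (intro exI[of _ "d * c"]) (simp add: sc_sc)
    qed
    thus "x \<in> pclass v \<longleftrightarrow> x \<in> pclass w" using c by (simp add: pclass_mem)
  qed
qed

lemma pg_points_iff: "P \<in> pg_points \<longleftrightarrow> (\<exists>v. v \<noteq> (0,0,0) \<and> P = pclass v)"
  by (auto simp: pg_points_def)

lemma pclass_in_line: 
  assumes "v \<noteq> (0,0,0)"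
  shows "pclass v \<in> line_of u \<longleftrightarrow> dot u v = 0"
proof -
  have pp: "pclass v \<in> pg_points" using assms unfolding pg_points_def by blast
  have "pclass v \<in> line_of u \<longleftrightarrow> (\<forall>w\<in>pclass v. dot u w = 0)"
    using pp unfolding line_of_def
    by (cases u) (auto split: prod.splits)
  also have "\<dots> \<longleftrightarrow> dot u v = 0"
  proof
    assume "\<forall>w\<in>pclass v. dot u w = 0" thus "dot u v = 0" using pclass_self[of v] by blast
  next
    assume "dot u v = 0" show "\<forall>w\<in>pclass v. dot u w = 0"
    proof
      fix w assume "w \<in> pclass v"
      then obtain c where "w = sc c v" using pclass_mem by blast
      thus "dot u w = 0" using \<open>dot u v = 0\<close> by (simp only: dot_sc) simp
    qed
  qed
  finally show ?thesis .
qed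

lemma line_ofE: "P \<in> line_of u \<Longrightarrow> \<exists>v. v \<noteq> (0,0,0) \<and> P = pclass v \<and> dot u v = 0"
  by (metis (no_types, lifting) line_of_def mem_Collect_eq pclass_in_line pg_points_iff)

lemma line_of_sc: assumes "c \<noteq> 0" shows "line_of (sc c u) = line_of u"
proof (rule Set.set_eqI)
  fix P
  show "P \<in> line_of (sc c u) \<longleftrightarrow> P \<in> line_of u"
  proof
    assume "P \<in> line_of (sc c u)"
    then obtain v where v: "v \<noteq> (0,0,0)" "P = pclass v" "dot (sc c u) v = 0" using line_ofE by blast
    hence "dot u v = 0" using assms by (simp add: dot_sc1)
    thus "P \<in> line_of u" using v pclass_in_line by blast
  next
    assume "P \<in> line_of u"
    then obtain v where v: "v \<noteq> (0,0,0)" "P = pclass v" "dot u v = 0" using line_ofE by blast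
    hence "dot (sc c u) v = 0" using assms by (simp add: dot_sc1)
    thus "P \<in> line_of (sc c u)" using v pclass_in_line by blast
  qed
qed

lemma cross_prop:
  assumes "a \<noteq> (0,0,0)" "cross a b = (0,0,0)"
  shows "\<exists>c. b = sc c a"
proof -
  obtain a0 a1 a2 where a: "a = (a0,a1,a2)" by (cases a)
  obtain b0 b1 b2 where b: "b = (b0,b1,b2)" by (cases b)
  have e: "a1*b2 = a2*b1" "a2*b0 = a0*b2" "a0*b1 = a1*b0" using assms(2) by (auto simp: a b)
  consider "a0 \<noteq> 0" | "a1 \<noteq> 0" | "a2 \<noteq> 0" using assms(1) a by auto
  thus ?thesis
  proof cases
    case 1 thus ?thesis using e
      by (intro exI[of _ "b0/a0"]) (auto simp: a b field_simps)
  next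
    case 2 thus ?thesis using e
      by (intro exI[of _ "b1/a1"]) (auto simp: a b field_simps)
  next
    case 3 thus ?thesis using e
      by (intro exI[of _ "b2/a2"]) (auto simp: a b field_simps)
  qed
qed

lemma cross_sc_self: "cross a (sc c a) = (0,0,0)"
  by (cases a) (simp add: algebra_simps)

lemma perp_both:
  assumes "cross x y \<noteq> (0,0,0)" "dot x w = 0" "dot y w = 0"
  shows "\<exists>c. w = sc c (cross x y)"
proof -
  have "cross (cross x y) w = (0,0,0)"
  proof -
    obtain x0 x1 x2 where x: "x = (x0,x1,x2)" by (cases x)
    obtain y0 y1 y2 where y: "y = (y0,y1,y2)" by (cases y)
    obtain w0 w1 w2 where w: "w = (w0,w1,w2)" by (cases w)
    have h1: "x0*w0 + x1*w1 + x2*w2 = 0" and h2: "y0*w0 + y1*w1 + y2*w2 = 0"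
      using assms by (auto simp: x y w)
    have "(x2 * y0 - x0 * y2) * w2 - (x0 * y1 - x1 * y0) * w1 = y0*(x0*w0 + x1*w1 + x2*w2) - x0*(y0*w0 + y1*w1 + y2*w2)"
      by (simp add: algebra_simps)
    moreover have "(x0 * y1 - x1 * y0) * w0 - (x1 * y2 - x2 * y1) * w2 = y1*(x0*w0 + x1*w1 + x2*w2) - x1*(y0*w0 + y1*w1 + y2*w2)"
      by (simp add: algebra_simps)
    moreover have "(x1 * y2 - x2 * y1) * w1 - (x2 * y0 - x0 * y2) * w0 = y2*(x0*w0 + x1*w1 + x2*w2) - x2*(y0*w0 + y1*w1 + y2*w2)"
      by (simp add: algebra_simps)
    ultimately show ?thesis unfolding x y w cross.simps using h1 h2 by simp
  qed
  thus ?thesis using cross_prop assms(1) by blast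
qed




locale hq =
  fixes q :: nat and ty :: "'a::{finite,field} itself"
  assumes q2: "q \<ge> 2"
  and card_F: "card (UNIV::'a set) = q^2"
  and frob_add: "\<And>x y::'a. (x+y)^q = x^q + y^q"
begin

lemma frob_inv: "(x::'a)^(q*q) = x"
proof (cases "x = 0")
  case False
  have "x * (\<Prod>y\<in>UNIV-{0}. x * y) = x * x ^ (card (UNIV :: 'a set) - 1) * \<Prod>(UNIV-{0})"
    by (simp add: prod.distrib mult_ac)
  also have "x * x ^ (card (UNIV :: 'a set) - 1) = x ^ Suc (card (UNIV :: 'a set) - 1)"
    by (subst power_Suc) auto
  also have "Suc (card (UNIV :: 'a set) - 1) = card (UNIV :: 'a set)"
    using finite_UNIV_card_ge_0[where ?'a = 'a] by simp
  also have "(\<Prod>y\<in>UNIV-{0}. x * y) = (\<Prod>y\<in>UNIV-{0}. y)"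
    by (rule prod.reindex_bij_witness[of _ "\<lambda>y. y / x" "\<lambda>y. x * y"]) (use False in auto)
  finally have "x ^ card (UNIV :: 'a set) = x"
    by simp
  thus ?thesis using card_F by (simp add: power2_eq_square)
qed (use q2 in auto)

lemma qpos: "q > 0" using q2 by simp

lemma frob_zero[simp]: "(0::'a)^q = 0" using qpos by simp
lemma frob_one[simp]: "(1::'a)^q = 1" by simp

lemma frob_neg: "(-x::'a)^q = -(x^q)"
proof -
  have "x^q + (-x)^q = 0" using frob_add[of x "-x"] by simp
  thus ?thesis by (simp add: eq_neg_iff_add_eq_0 add.commute)
qed

lemma frob_diff: "(x - y::'a)^q = x^q - y^q"
  using frob_add[of x "-y"] frob_neg[of y] by simp

lemma frob_eq0[simp]: "((x::'a)^q = 0) = (x = 0)"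
  using qpos by simp

lemma frob_inj: "((x::'a)^q = y^q) = (x = y)"
  using frob_diff[of x y] by (metis frob_eq0 right_minus_eq)

lemma frob_frob: "((x::'a)^q)^q = x"
  by (metis frob_inv power_mult)

lemma card_fibres: fixes T :: "'a \<Rightarrow> 'b"
  shows "card (UNIV::'a set) = (\<Sum>b\<in>T ` UNIV. card {a. T a = b})"
proof -
  have "UNIV = (\<Union>b\<in>T ` UNIV. {a. T a = b})" by auto
  hence "card (UNIV::'a set) = card (\<Union>b\<in>T ` UNIV. {a. T a = b})" by simp
  also have "\<dots> = (\<Sum>b\<in>T ` UNIV. card {a. T a = b})"
    by (rule card_UN_disjoint) auto
  finally show ?thesis .
qed

definition Kset :: "'a set" where "Kset = {y. y^q = y}"

lemma roots_le: 
  fixes c :: 'a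
  shows "card {x. x^q + x = c} \<le> q"
proof -
  let ?p = "Polynomial.monom 1 q + [:-c, 1:]"
  have dq: "degree ?p = q"
    using q2 by (subst degree_add_eq_left) (auto simp: degree_monom_eq)
  hence "?p \<noteq> 0" using q2 by auto
  hence "card {x. poly ?p x = 0} \<le> degree ?p" by (rule card_poly_roots_bound)
  moreover have "{x. poly ?p x = 0} = {x. x^q + x = c}"
    by (auto simp: poly_monom algebra_simps)
  ultimately show ?thesis using dq by simp
qed

lemma K_le: "card Kset \<le> q"
proof -
  let ?p = "Polynomial.monom 1 q + [:0, -1:] :: 'a poly"
  have dq: "degree ?p = q"
    using q2 by (subst degree_add_eq_left) (auto simp: degree_monom_eq)
  hence "?p \<noteq> 0" using q2 by auto
  hence "card {x. poly ?p x = 0} \<le> degree ?p" by (rule card_poly_roots_bound)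
  moreover have "{x. poly ?p x = 0} = Kset"
    by (auto simp: poly_monom algebra_simps Kset_def)
  ultimately show ?thesis using dq by simp
qed

lemma trace_fiber:
  fixes c :: 'a
  assumes "c^q = c"
  shows "card {x. x + x^q = c} = q"
proof -
  define T where "T = (\<lambda>x::'a. x + x^q)"
  have TK: "T x \<in> Kset" for x
    unfolding T_def Kset_def by (simp add: frob_add frob_frob)
  have fib: "card {x. T x = d} \<le> q" for d
    using roots_le[of d] unfolding T_def by (simp add: add.commute)
  have "q^2 = card (UNIV::'a set)" using card_F by simp
  also have "\<dots> = (\<Sum>b\<in>T ` UNIV. card {a\<in>UNIV. T a = b})"
    by (simp add: card_fibres)
  also have "\<dots> \<le> (\<Sum>b\<in>T ` UNIV. q)"
    by (rule sum_mono) (use fib in simp)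
  also have "\<dots> = card (T ` UNIV) * q" by simp
  finally have A: "q^2 \<le> card (T ` UNIV) * q" .
  have sub: "T ` UNIV \<subseteq> Kset" using TK by auto
  hence "card (T ` UNIV) \<le> card Kset" by (intro card_mono) auto
  with K_le have B: "card (T ` UNIV) \<le> q" by simp
  with A qpos have C: "card (T ` UNIV) = q"
    by (metis le_antisym mult_le_cancel2 power2_eq_square)
  hence "T ` UNIV = Kset" using sub K_le
    by (metis card_seteq finite)
  hence cim: "c \<in> T ` UNIV" using assms by (auto simp: Kset_def)
  have eq: "(\<Sum>b\<in>T ` UNIV. card {a. T a = b}) = (\<Sum>b\<in>T ` UNIV. q)"
  proof -
    have "(\<Sum>b\<in>T ` UNIV. card {a. T a = b}) = q^2"
      using card_fibres[of T] card_F by simp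
    also have "\<dots> = (\<Sum>b\<in>T ` UNIV. q)" using C by (simp add: power2_eq_square)
    finally show ?thesis .
  qed
  have "\<forall>b\<in>T ` UNIV. card {a. T a = b} = q"
    using sum_mono_inv[OF eq] fib by (metis finite)
  thus ?thesis using cim unfolding T_def by auto
qed


end

fun herm :: "nat \<Rightarrow> 'a::field vec3 \<Rightarrow> 'a" where
  "herm q (x0,x1,x2) = x2*x0^q + x2^q*x0 + x1^(q+1)"
fun tang :: "nat \<Rightarrow> 'a::field vec3 \<Rightarrow> 'a vec3" where
  "tang q (a0,a1,a2) = (a2^q, a1^q, a0^q)"

lemma herm_sc: "herm q (sc c v) = c^(q+1) * herm q v"
  by (cases v) (simp add: power_mult_distrib algebra_simps)

lemma pclass_in_herm:
  assumes "v \<noteq> (0,0,0)"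
  shows "pclass v \<in> hermitian q \<longleftrightarrow> herm q v = 0"
proof -
  have pp: "pclass v \<in> pg_points" using assms unfolding pg_points_def by blast
  have "pclass v \<in> hermitian q \<longleftrightarrow> (\<forall>w\<in>pclass v. herm q w = 0)"
    using pp unfolding hermitian_def by (auto split: prod.splits)
  also have "\<dots> \<longleftrightarrow> herm q v = 0"
  proof
    assume "\<forall>w\<in>pclass v. herm q w = 0" thus "herm q v = 0" using pclass_self[of v] by blast
  next
    assume "herm q v = 0" show "\<forall>w\<in>pclass v. herm q w = 0"
    proof
      fix w assume "w \<in> pclass v"
      then obtain c where "w = sc c v" using pclass_mem by blast
      thus "herm q w = 0" using \<open>herm q v = 0\<close> by (simp only: herm_sc) simp
    qed
  qed
  finally show ?thesis .
qed

lemma herm_sub: "hermitian q \<subseteq> pg_points" unfolding hermitian_def by auto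

lemma hermE: "P \<in> hermitian q \<Longrightarrow> \<exists>v. v \<noteq> (0,0,0) \<and> P = pclass v \<and> herm q v = 0"
  by (metis herm_sub pclass_in_herm pg_points_iff subsetD)

lemma dot_tang_self: "dot (tang q a) a = herm q a"
  by (cases a) (simp add: algebra_simps power_add)

context hq begin

lemma dot_tang_swap: "dot (tang q b) (a::'a vec3) = (dot (tang q a) b)^q"
  by (cases a; cases b) (simp add: frob_add power_mult_distrib frob_frob algebra_simps)

lemma tang_nz: "(a::'a vec3) \<noteq> (0,0,0) \<Longrightarrow> tang q a \<noteq> (0,0,0)"
  by (cases a) auto

lemma herm_K: "(herm q (b::'a vec3))^q = herm q b"
  by (cases b) (simp add: frob_add power_mult_distrib frob_frob algebra_simps power_add)

lemma herm_expand: "herm q (vadd (sc l a) b) = l^(q+1)*herm q a + l * (dot (tang q a) b)^q + l^q * dot (tang q a) b + herm q (b::'a vec3)"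
  by (cases a; cases b) (simp add: frob_add power_mult_distrib frob_frob algebra_simps power_add)

lemma frob_sc: "tang q (sc c a) = sc (c^q) (tang q (a::'a vec3))"
  by (cases a) (simp add: power_mult_distrib)

lemma tang_inj: "tang q x = tang q (y::'a vec3) \<Longrightarrow> x = y"
  by (cases x; cases y) (simp add: frob_inj)

lemma tangent_only:
  assumes a0: "(a::'a vec3) \<noteq> (0,0,0)" and b0: "b \<noteq> (0,0,0)"
    and ha: "herm q a = 0" and hb: "herm q b = 0" and t: "dot (tang q a) b = 0"
  shows "\<exists>c. c \<noteq> 0 \<and> b = sc c a"
proof (cases "cross a b = (0,0,0)")
  case True
  then obtain c where c: "b = sc c a" using cross_prop a0 by blast
  hence "c \<noteq> 0" using b0 sc_zero_iff by blast
  thus ?thesis using c by blast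
next
  case False
  have "dot a (tang q a) = 0" using ha dot_tang_self[of q a] dot_comm by metis
  moreover have "dot b (tang q a) = 0" using t dot_comm by metis
  ultimately have "\<exists>c. tang q a = sc c (cross a b)"
    using perp_both[OF False] by blast
  then obtain c1 where c1: "tang q a = sc c1 (cross a b)" by blast
  have "dot (tang q b) a = 0" unfolding dot_tang_swap[of b a] t by simp
  hence "dot a (tang q b) = 0" using dot_comm by metis
  moreover have "dot b (tang q b) = 0" using hb dot_tang_self[of q b] dot_comm by metis
  ultimately have "\<exists>c. tang q b = sc c (cross a b)"
    using perp_both[OF False] by blast
  then obtain c2 where c2: "tang q b = sc c2 (cross a b)" by blast
  have "c1 \<noteq> 0" using c1 tang_nz[OF a0] sc_zero_iff by metis
  hence "sc (c2/c1) (tang q a) = sc c2 (cross a b)" using c1 by (simp add: sc_sc)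
  hence "tang q b = sc (c2/c1) (tang q a)" using c2 by simp
  also have "sc (c2/c1) (tang q a) = tang q (sc ((c2/c1)^q) a)" by (simp only: frob_sc frob_frob)
  finally have "b = sc ((c2/c1)^q) a" by (rule tang_inj)
  hence "cross a b = (0,0,0)" by (simp add: cross_sc_self)
  with False show ?thesis by simp
qed

lemma herm_line: "herm q (a::'a vec3) = 0 \<Longrightarrow> herm q (vadd (sc l a) b) = l * (dot (tang q a) b)^q + (l * (dot (tang q a) b)^q)^q + herm q b"
  by (simp add: herm_expand power_mult_distrib frob_frob mult.commute)

end

lemma ex_b:
  assumes "(a::'a::field vec3) \<noteq> (0,0,0)" "u \<noteq> (0,0,0)" "dot u a = 0"
  shows "\<exists>b. dot u b = 0 \<and> cross a b \<noteq> (0,0,0)"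
proof -
  obtain a0 a1 a2 where a: "a = (a0,a1,a2)" by (cases a)
  obtain u0 u1 u2 where u: "u = (u0,u1,u2)" by (cases u)
  have d: "u0*a0 + u1*a1 + u2*a2 = 0" using assms(3) by (simp add: a u)
  have "\<exists>b. dot u b = 0 \<and> cross a b = sc a0 u" 
    by (rule exI[of _ "(0, u2, -u1)"]) (use d in \<open>auto simp: a u algebra_simps\<close>, 
       metis add.commute add_eq_0_iff2 mult.commute add.assoc add.left_commute)
  moreover have "\<exists>b. dot u b = 0 \<and> cross a b = sc a1 u"
    by (rule exI[of _ "(-u2, 0, u0)"]) (use d in \<open>auto simp: a u algebra_simps\<close>, 
       metis add.commute add_eq_0_iff2 mult.commute add.assoc add.left_commute)
  moreover have "\<exists>b. dot u b = 0 \<and> cross a b = sc a2 u"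
    by (rule exI[of _ "(u1, -u0, 0)"]) (use d in \<open>auto simp: a u algebra_simps\<close>, 
       metis add.commute add_eq_0_iff2 mult.commute add.assoc add.left_commute)
  ultimately show ?thesis using assms(1,2) a sc_zero_iff by (metis)
qed


lemma cross_sc_sc: "cross (sc c z) (sc d z) = (0,0,0)"
  by (cases z) (simp add: algebra_simps)

lemma indep:
  assumes "cross a b \<noteq> (0,0,0)" "vadd (sc x a) (sc y b) = (0,0,0)"
  shows "x = 0 \<and> y = 0"
proof -
  obtain a0 a1 a2 where a: "a = (a0,a1,a2)" by (cases a)
  obtain b0 b1 b2 where b: "b = (b0,b1,b2)" by (cases b)
  have e: "x*a0 + y*b0 = 0" "x*a1 + y*b1 = 0" "x*a2 + y*b2 = 0" using assms(2) by (auto simp: a b)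
  have "cross a (vadd (sc x a) (sc y b)) = sc y (cross a b)"
    by (simp add: a b algebra_simps)
  hence "sc y (cross a b) = (0,0,0)" using assms(2) by (simp add: a)
  hence y: "y = 0" using assms(1) sc_zero_iff by blast
  have "cross (vadd (sc x a) (sc y b)) b = sc x (cross a b)"
    by (simp add: a b algebra_simps)
  hence "sc x (cross a b) = (0,0,0)" using assms(2) by (simp add: b)
  hence "x = 0" using assms(1) sc_zero_iff by blast
  with y show ?thesis by simp
qed

lemma div_helper: "(z::'a::field) \<noteq> 0 \<Longrightarrow> x*a + y*b = w*z \<Longrightarrow> x/z*a + y/z*b = w"
proof -
  assume z: "z \<noteq> 0" and e: "x*a + y*b = w*z"
  have "x/z*a + y/z*b = (x*a + y*b)/z" by (simp add: add_divide_distrib)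
  also have "\<dots> = w" using e z by simp
  finally show ?thesis .
qed

lemma span:
  assumes "cross a b \<noteq> (0,0,0)" "dot (cross a b) w = 0"
  shows "\<exists>x y. w = vadd (sc x a) (sc y b)"
proof -
  obtain a0 a1 a2 where a: "a = (a0,a1,a2)" by (cases a)
  obtain b0 b1 b2 where b: "b = (b0,b1,b2)" by (cases b)
  obtain w0 w1 w2 where w: "w = (w0,w1,w2)" by (cases w)
  have d: "(a1*b2 - a2*b1)*w0 + (a2*b0 - a0*b2)*w1 + (a0*b1 - a1*b0)*w2 = 0"
    using assms(2) by (simp add: a b w)
  consider "a1*b2 - a2*b1 \<noteq> 0" | "a2*b0 - a0*b2 \<noteq> 0" | "a0*b1 - a1*b0 \<noteq> 0"
    using assms(1) by (auto simp: a b)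
  thus ?thesis
  proof cases
    case 1
    let ?z = "a1*b2 - a2*b1"
    show ?thesis
    proof (intro exI)
      have z: "?z \<noteq> 0" using 1 .
      have e0: "((w1*b2 - w2*b1)*a0 + (a1*w2 - a2*w1)*b0) = w0 * ?z" using d by (simp add: algebra_simps)
      have e1: "((w1*b2 - w2*b1)*a1 + (a1*w2 - a2*w1)*b1) = w1 * ?z" by (simp add: algebra_simps)
      have e2: "((w1*b2 - w2*b1)*a2 + (a1*w2 - a2*w1)*b2) = w2 * ?z" by (simp add: algebra_simps)
      have "(w1*b2 - w2*b1)/?z*a0 + (a1*w2 - a2*w1)/?z*b0 = w0" using div_helper[OF z e0] .
      moreover have "(w1*b2 - w2*b1)/?z*a1 + (a1*w2 - a2*w1)/?z*b1 = w1" using div_helper[OF z e1] .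
      moreover have "(w1*b2 - w2*b1)/?z*a2 + (a1*w2 - a2*w1)/?z*b2 = w2" using div_helper[OF z e2] .
      ultimately show "w = vadd (sc ((w1*b2 - w2*b1)/?z) a) (sc ((a1*w2 - a2*w1)/?z) b)"
        by (simp add: a b w)
    qed
  next
    case 2
    let ?z = "a2*b0 - a0*b2"
    show ?thesis
    proof (intro exI)
      have z: "?z \<noteq> 0" using 2 .
      have e0: "((w2*b0 - w0*b2)*a1 + (a2*w0 - a0*w2)*b1) = w1 * ?z" using d by (simp add: algebra_simps)
      have e1: "((w2*b0 - w0*b2)*a2 + (a2*w0 - a0*w2)*b2) = w2 * ?z" by (simp add: algebra_simps)
      have e2: "((w2*b0 - w0*b2)*a0 + (a2*w0 - a0*w2)*b0) = w0 * ?z" by (simp add: algebra_simps)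
      have "(w2*b0 - w0*b2)/?z*a1 + (a2*w0 - a0*w2)/?z*b1 = w1" using div_helper[OF z e0] .
      moreover have "(w2*b0 - w0*b2)/?z*a2 + (a2*w0 - a0*w2)/?z*b2 = w2" using div_helper[OF z e1] .
      moreover have "(w2*b0 - w0*b2)/?z*a0 + (a2*w0 - a0*w2)/?z*b0 = w0" using div_helper[OF z e2] .
      ultimately show "w = vadd (sc ((w2*b0 - w0*b2)/?z) a) (sc ((a2*w0 - a0*w2)/?z) b)"
        by (simp add: a b w)
    qed
  next
    case 3
    let ?z = "a0*b1 - a1*b0"
    show ?thesis
    proof (intro exI)
      have z: "?z \<noteq> 0" using 3 .
      have e0: "((w0*b1 - w1*b0)*a2 + (a0*w1 - a1*w0)*b2) = w2 * ?z" using d by (simp add: algebra_simps)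
      have e1: "((w0*b1 - w1*b0)*a0 + (a0*w1 - a1*w0)*b0) = w0 * ?z" by (simp add: algebra_simps)
      have e2: "((w0*b1 - w1*b0)*a1 + (a0*w1 - a1*w0)*b1) = w1 * ?z" by (simp add: algebra_simps)
      have "(w0*b1 - w1*b0)/?z*a2 + (a0*w1 - a1*w0)/?z*b2 = w2" using div_helper[OF z e0] .
      moreover have "(w0*b1 - w1*b0)/?z*a0 + (a0*w1 - a1*w0)/?z*b0 = w0" using div_helper[OF z e1] .
      moreover have "(w0*b1 - w1*b0)/?z*a1 + (a0*w1 - a1*w0)/?z*b1 = w1" using div_helper[OF z e2] .
      ultimately show "w = vadd (sc ((w0*b1 - w1*b0)/?z) a) (sc ((a0*w1 - a1*w0)/?z) b)"
        by (simp add: a b w)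
    qed
  qed
qed


lemma vsub_self: "vadd x (sc (-1) x) = (0,0,0)"
  by (cases x) simp

lemma comb1: "vadd (sc (m - d*l) a) (sc (1-d) b) = vadd (vadd (sc m a) b) (sc (-1) (sc d (vadd (sc l a) b)))"
  by (cases a; cases b) (simp add: algebra_simps)

lemma comb2: "vadd (sc (l - d) a) (sc 1 b) = vadd (vadd (sc l a) b) (sc (-1) (sc d a))"
  by (cases a; cases b) (simp add: algebra_simps)

lemma comb3: "(y::'a::field) \<noteq> 0 \<Longrightarrow> vadd (sc x a) (sc y b) = sc y (vadd (sc (x/y) a) b)"
  by (cases a; cases b) (simp add: algebra_simps)

lemma comb4: "vadd (sc x a) (sc 0 b) = sc x a"
  by (cases a; cases b) simp

lemma comb5: "vadd (sc l a) (sc 1 b) = vadd (sc l a) b"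
  by (cases b) simp

context hq begin

lemma secant:
  assumes a0: "(a::'a vec3) \<noteq> (0,0,0)" and ha: "herm q a = 0" and u0: "u \<noteq> (0,0,0)"
    and ua: "dot u a = 0" and nt: "line_of u \<noteq> line_of (tang q a)"
  shows "card (line_of u \<inter> hermitian q) = q + 1"
proof -
  let ?t = "tang q a"
  have t0: "?t \<noteq> (0,0,0)" using tang_nz[OF a0] .
  have ct: "cross ?t u \<noteq> (0,0,0)"
  proof
    assume "cross ?t u = (0,0,0)"
    then obtain c where c: "u = sc c ?t" using cross_prop t0 by blast
    hence "c \<noteq> 0" using u0 sc_zero_iff by metis
    hence "line_of u = line_of ?t" using c line_of_sc by simp
    with nt show False by simp
  qed
  obtain b where ub: "dot u b = 0" and ab: "cross a b \<noteq> (0,0,0)" using ex_b[OF a0 u0 ua] by blast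
  define s where "s = dot ?t b"
  have s0: "s \<noteq> 0"
  proof
    assume "s = 0"
    have "\<exists>c. a = sc c (cross ?t u)"
      using perp_both[OF ct] dot_tang_self[of q a] ha ua by (simp add: dot_comm)
    then obtain c1 where c1: "a = sc c1 (cross ?t u)" by blast
    have "\<exists>c. b = sc c (cross ?t u)"
      using perp_both[OF ct] \<open>s = 0\<close> ub s_def by (simp add: dot_comm)
    then obtain c2 where c2: "b = sc c2 (cross ?t u)" by blast
    have "cross a b = (0,0,0)" by (metis c1 c2 cross_sc_sc)
    with ab show False by simp
  qed
  have "\<exists>c. u = sc c (cross a b)"
    using perp_both[OF ab] ua ub by (simp add: dot_comm)
  then obtain c where c: "u = sc c (cross a b)" by blast
  have c0: "c \<noteq> 0" using c u0 sc_zero_iff by metis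
  have spanu: "\<exists>x y. w = vadd (sc x a) (sc y b)" if "dot u w = 0" for w
  proof -
    have "c * dot (cross a b) w = 0" using that c dot_sc1 by metis
    hence "dot (cross a b) w = 0" using c0 by simp
    thus ?thesis using span[OF ab] by blast
  qed
  define f where "f = (\<lambda>l. pclass (vadd (sc l a) b))"
  define L where "L = {l. herm q (vadd (sc l a) b) = 0}"
  have nz: "vadd (sc l a) b \<noteq> (0,0,0)" for l
  proof
    assume "vadd (sc l a) b = (0,0,0)"
    hence "vadd (sc l a) (sc 1 b) = (0,0,0)" by (simp only: comb5)
    hence "l = 0 \<and> (1::'a) = 0" using indep[OF ab] by blast
    thus False by simp
  qed
  have onu: "dot u (vadd (sc l a) b) = 0" for l
    by (simp add: dot_vadd dot_sc ua ub)
  have injf: "inj_on f L"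
  proof
    fix l m assume "f l = f m"
    then obtain d where d: "d \<noteq> 0" "vadd (sc m a) b = sc d (vadd (sc l a) b)"
      unfolding f_def pclass_eq_iff by blast
    hence "vadd (sc (m - d*l) a) (sc (1 - d) b) = (0,0,0)"
      by (simp only: comb1 vsub_self)
    hence "m - d*l = 0 \<and> 1 - d = 0" using indep[OF ab] by blast
    thus "l = m" by simp
  qed
  have notin: "pclass a \<notin> f ` L"
  proof
    assume "pclass a \<in> f ` L"
    then obtain l where "pclass a = f l" by blast
    then obtain d where d: "d \<noteq> 0" "vadd (sc l a) b = sc d a"
      unfolding f_def pclass_eq_iff by blast
    hence "vadd (sc (l - d) a) (sc 1 b) = (0,0,0)"
      by (simp only: comb2 vsub_self)
    hence "l - d = 0 \<and> (1::'a) = 0" using indep[OF ab] by blast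
    thus False by simp
  qed
  have seteq: "line_of u \<inter> hermitian q = insert (pclass a) (f ` L)"
  proof (rule Set.set_eqI, rule iffI)
    fix P assume "P \<in> line_of u \<inter> hermitian q"
    then obtain w where w: "w \<noteq> (0,0,0)" "P = pclass w" "dot u w = 0" "herm q w = 0"
      using line_ofE pclass_in_herm by blast
    then obtain x y where xy: "w = vadd (sc x a) (sc y b)" using spanu by blast
    show "P \<in> insert (pclass a) (f ` L)"
    proof (cases "y = 0")
      case True
      hence "w = sc x a" using xy comb4 by simp
      hence "x \<noteq> 0" using w(1) by (cases a) auto
      hence "pclass a = pclass w" using \<open>w = sc x a\<close> pclass_eq_iff by blast
      hence "P = pclass a" using w(2) by simp
      thus ?thesis by simp
    next
      case False
      have ww: "w = sc y (vadd (sc (x/y) a) b)" using xy comb3[OF False] by simp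
      hence "pclass (vadd (sc (x/y) a) b) = pclass w" using False pclass_eq_iff by blast
      hence "P = f (x/y)" unfolding f_def using w(2) by simp
      moreover have "herm q (vadd (sc (x/y) a) b) = 0"
        using w(4) ww False by (simp add: herm_sc)
      ultimately show ?thesis unfolding L_def by blast
    qed
  next
    fix P assume "P \<in> insert (pclass a) (f ` L)"
    thus "P \<in> line_of u \<inter> hermitian q"
    proof
      assume "P = pclass a"
      thus ?thesis using a0 ua ha pclass_in_line pclass_in_herm by blast
    next
      assume "P \<in> f ` L"
      then obtain l where l: "l \<in> L" "P = f l" by blast
      thus ?thesis unfolding f_def L_def using nz onu pclass_in_line pclass_in_herm by blast
    qed
  qed
  define sg where "sg = s^q"
  have sg0: "sg \<noteq> 0" using s0 sg_def by simp
  have L_eq: "L = {l. l * sg + (l * sg)^q = - herm q b}"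
    unfolding L_def sg_def s_def using herm_line[OF ha] by (simp add: eq_neg_iff_add_eq_0 add.assoc)
  have cK: "(- herm q b)^q = - herm q b" by (simp add: frob_neg herm_K)
  have "(\<lambda>l. l * sg) ` L = {y. y + y^q = - herm q b}"
  proof (rule Set.set_eqI, rule iffI)
    fix y assume "y \<in> (\<lambda>l. l * sg) ` L" thus "y \<in> {y. y + y^q = - herm q b}" using L_eq by auto
  next
    fix y assume "y \<in> {y. y + y^q = - herm q b}"
    hence "y / sg \<in> L" using L_eq sg0 by simp
    moreover have "y = y / sg * sg" using sg0 by simp
    ultimately show "y \<in> (\<lambda>l. l * sg) ` L" by blast
  qed
  moreover have "inj_on (\<lambda>l. l * sg) L" using sg0 by (auto intro: inj_onI)
  ultimately have "card L = q" using trace_fiber[OF cK] card_image[of "\<lambda>l. l * sg" L] by simp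
  hence "card (f ` L) = q" using card_image[OF injf] by simp
  thus ?thesis using seteq notin by simp
qed

end




lemma field_facts:
  assumes "prime_power q" and "card (UNIV :: ('a::{finite,field}) set) = q ^ 2"
  shows "hq TYPE('a) q"
proof -
  obtain p k where pk: "prime p" "k \<ge> 1" "q = p ^ k" using assms(1) unfolding prime_power_def by blast
  have p2: "p \<ge> 2" using pk(1) prime_ge_2_nat by blast
  have "p ^ 1 \<le> p ^ k" by (rule power_increasing) (use pk p2 in auto)
  hence q2: "q \<ge> 2" using p2 pk(3) by simp
  have cp: "CHAR('a) > 0" by (rule finite_imp_CHAR_pos) simp
  hence pc: "prime CHAR('a)" by (rule prime_CHAR_semidom)
  have "CHAR('a) dvd card (UNIV::'a set)" by (rule CHAR_dvd_CARD)
  hence "CHAR('a) dvd p ^ (k*2)" using assms(2) pk(3)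
    by (simp add: power_mult)
  hence "CHAR('a) dvd p" using pc prime_dvd_power by blast
  hence ch: "CHAR('a) = p" using pc pk(1) primes_dvd_imp_eq by blast
  show ?thesis
  proof
    show "2 \<le> q" by fact
    show "card (UNIV::'a set) = q^2" by fact
    fix x y :: 'a
    show "(x + y) ^ q = x ^ q + y ^ q"
      by (rule freshmans_dream'[OF pc]) (simp add: ch pk(3))
  qed
qed

context hq begin

lemma herm_card: "card (hermitian q :: 'a vec3 set set) \<ge> q^3 + 1"
proof -
  define A where "A = (SIGMA x:(UNIV::'a set). {y. y + y^q = - (x^(q+1))})"
  define g where "g = (\<lambda>(x,y). pclass ((1::'a), x, y))"
  have fib: "card {y. y + y^q = - (x^(q+1))} = q" for x :: 'a
  proof (rule trace_fiber)
    have "(x^(q+1))^q = x^(q+1)"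
      by (simp add: power_add power_mult_distrib frob_frob mult.commute)
    thus "(- (x ^ (q + 1))) ^ q = - (x ^ (q + 1))" by (simp add: frob_neg)
  qed
  have cA: "card A = q^3"
    unfolding A_def using fib card_F by (simp add: power2_eq_square power3_eq_cube)
  have injg: "inj_on g A"
  proof
    fix v w assume "v \<in> A" "w \<in> A" "g v = g w"
    obtain x y where v: "v = (x,y)" by (cases v)
    obtain x' y' where w: "w = (x',y')" by (cases w)
    have "pclass (1::'a, x, y) = pclass (1, x', y')" using \<open>g v = g w\<close> unfolding g_def v w by simp
    then obtain c where "c \<noteq> 0" "(1::'a, x', y') = sc c (1, x, y)"
      unfolding pclass_eq_iff by blast
    thus "v = w" using v w by simp
  qed
  have notin: "pclass (0::'a,0,1) \<notin> g ` A"
  proof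
    assume "pclass (0::'a,0,1) \<in> g ` A"
    then obtain x y where "pclass (0::'a,0,1) = pclass (1,x,y)" unfolding g_def by auto
    then obtain c where "(1::'a, x, y) = sc c (0, 0, 1)" unfolding pclass_eq_iff by blast
    thus False by simp
  qed
  have sub: "insert (pclass (0::'a,0,1)) (g ` A) \<subseteq> hermitian q"
  proof
    fix P assume "P \<in> insert (pclass (0::'a,0,1)) (g ` A)"
    thus "P \<in> hermitian q"
    proof
      assume "P = pclass (0::'a,0,1)"
      thus ?thesis using pclass_in_herm[of "(0::'a,0,1)" q] qpos by simp
    next
      assume "P \<in> g ` A"
      then obtain x y where xy: "y + y^q = - (x^(q+1))" "P = pclass (1::'a,x,y)"
        unfolding g_def A_def by auto
      have "herm q (1::'a,x,y) = 0" using xy(1) by (simp add: add_eq_0_iff2 add.commute)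
      thus ?thesis using xy(2) pclass_in_herm[of "(1::'a,x,y)" q] by simp
    qed
  qed
  have "card (insert (pclass (0::'a,0,1)) (g ` A)) = q^3 + 1"
    using notin card_image[OF injg] cA by simp
  thus ?thesis using card_mono[OF _ sub] by simp
qed

lemma B_nonempty:
  assumes "two_blocking_set q (B :: 'a vec3 set set)"
  shows "B \<noteq> {}"
proof -
  let ?a = "(0::'a, 0::'a, 1::'a)"
  let ?u = "(0::'a, 1::'a, 0::'a)"
  have ha: "herm q ?a = 0" using qpos by simp
  have ta: "tang q ?a = (1,0,0)" using qpos by simp
  have "pclass (1::'a,0,0) \<in> line_of ?u" using pclass_in_line[of "(1::'a,0,0)"] by simp
  moreover have "pclass (1::'a,0,0) \<notin> line_of (tang q ?a)" using pclass_in_line[of "(1::'a,0,0)"] ta by simp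
  ultimately have "line_of ?u \<noteq> line_of (tang q ?a)" by blast
  hence "card (line_of ?u \<inter> hermitian q) = q + 1"
    by (rule secant[rotated 4]) (simp_all add: ha)
  moreover have "line_of ?u \<in> pg_lines" unfolding pg_lines_def
    by (rule CollectI, rule exI[of _ ?u]) simp
  ultimately have "card (line_of ?u \<inter> B) \<ge> 2" using assms unfolding two_blocking_set_def by blast
  thus ?thesis by auto
qed

end



theorem mainTheorem2:
  fixes q :: nat and B :: "('a::{finite, field}) vec3 set set"
  assumes "prime_power q"
    and "card (UNIV :: 'a set) = q ^ 2"
    and "two_blocking_set q B"
  shows "\<forall>k::nat. card B \<le> k \<and> k \<le> q ^ 3 + 1 \<longrightarrow>
           (\<exists>S :: 'a vec3 set set. semioval S \<and> card S = k)"
proof (intro allI impI)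
  fix k :: nat
  assume k: "card B \<le> k \<and> k \<le> q ^ 3 + 1"
  interpret hq q "TYPE('a)" using field_facts[OF assms(1,2)] .
  let ?H = "hermitian q :: 'a vec3 set set"
  have BH: "B \<subseteq> ?H" using assms(3) unfolding two_blocking_set_def by blast
  have cH: "card ?H \<ge> q^3 + 1" by (rule herm_card)
  have "k - card B \<le> card ?H - card B"
    using k cH by (intro diff_le_mono) linarith
  hence "k - card B \<le> card (?H - B)"
    using BH by (simp add: card_Diff_subset)
  then obtain T where T: "T \<subseteq> ?H - B" "card T = k - card B"
    by (meson obtain_subset_with_card_n)
  define S where "S = B \<union> T"
  have cS: "card S = k" unfolding S_def using T k
    by (subst card_Un_disjoint) auto
  have SH: "S \<subseteq> ?H" unfolding S_def using T BH by auto
  have Bne: "B \<noteq> {}" using B_nonempty[OF assms(3)] .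
  have "semioval S"
    unfolding semioval_def
  proof (intro conjI ballI)
    show "S \<subseteq> pg_points" using SH herm_sub by blast
    show "S \<noteq> {}" using Bne S_def by blast
    fix P assume PS: "P \<in> S"
    then obtain a where a: "a \<noteq> (0,0,0)" "P = pclass a" "herm q a = 0"
      using SH hermE by blast
    let ?t = "line_of (tang q a)"
    have tl: "?t \<in> pg_lines" using tang_nz[OF a(1)] unfolding pg_lines_def by blast
    have Pt: "P \<in> ?t" using pclass_in_line[OF a(1)] a dot_tang_self by metis
    have St: "S \<inter> ?t = {P}"
    proof
      show "{P} \<subseteq> S \<inter> ?t" using PS Pt by blast
      show "S \<inter> ?t \<subseteq> {P}"
      proof
        fix Y assume Y: "Y \<in> S \<inter> ?t"
        then obtain b where b: "b \<noteq> (0,0,0)" "Y = pclass b" "herm q b = 0"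
          using SH hermE by blast
        have "dot (tang q a) b = 0" using Y b pclass_in_line by blast
        then obtain c where "c \<noteq> 0" "b = sc c a" using tangent_only[OF a(1) b(1) a(3) b(3)] by blast
        hence "pclass a = pclass b" using pclass_eq_iff by blast
        thus "Y \<in> {P}" using a b by simp
      qed
    qed
    show "\<exists>!l. l \<in> pg_lines \<and> S \<inter> l = {P}"
    proof (rule ex1I[of _ ?t])
      show "?t \<in> pg_lines \<and> S \<inter> ?t = {P}" using tl St by blast
      fix l assume l: "l \<in> pg_lines \<and> S \<inter> l = {P}"
      then obtain u where u: "u \<noteq> (0,0,0)" "l = line_of u" unfolding pg_lines_def by blast
      have "P \<in> l" using l by blast
      hence ua: "dot u a = 0" using u a pclass_in_line by blast
      show "l = ?t"
      proof (rule ccontr)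
        assume "l \<noteq> ?t"
        hence "card (l \<inter> ?H) = q + 1" using secant[OF a(1) a(3) u(1) ua] u by simp
        hence "card (l \<inter> B) \<ge> 2" using assms(3) l unfolding two_blocking_set_def by blast
        moreover have "l \<inter> B \<subseteq> {P}" using l S_def by blast
        hence "card (l \<inter> B) \<le> card {P}" by (rule card_mono[rotated]) simp
        hence "card (l \<inter> B) \<le> 1" by simp
        ultimately show False by simp
      qed
    qed
  qed
  thus "\<exists>S :: 'a vec3 set set. semioval S \<and> card S = k" using cS by blast
qed

end
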